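(* Let $m,n\ge 1$ and let $k>0$ and $l$ be fixed integers. Let $P,Q$ be constant $n\times n$ complex matrices, let $\mathfrak{R}(P)$ be a finite set of distinct invertible constant $n\times n$ matrices $\Lambda$ with $-(\Lambda^{k}+\Lambda^{k-l})=P$, and let $\mathfrak{R}(Q)$ be a finite set of distinct invertible constant $n\times n$ matrices $\tilde\Lambda$ with $-(\tilde\Lambda^{k}+\tilde\Lambda^{k-l})=Q$. For each $\Lambda\in\mathfrak{R}(P)$ let $A_\Lambda$ be a constant $m\times n$ matrix, for each $\tilde\Lambda\in\mathfrak{R}(Q)$ let $B_{\tilde\Lambda}$ be a constant $n\times m$ matrix, and for each pair let $X_{\tilde\Lambda,\Lambda}$ be a constant $n\times n$ matrix satisfying $\tilde\Lambda^{-l}X_{\tilde\Lambda,\Lambda}\Lambda^{l}-X_{\tilde\Lambda,\Lambda}=B_{\tilde\Lambda}A_\Lambda$. Let $\tilde\omega$ be a constant $n\times n$ matrix and set $\gamma_1=\tilde\omega P-Q\tilde\omega$. Define $$\theta=\sum_{\Lambda\in\mathfrak{R}(P)}A_\Lambda e^{\Lambda^l t}\Lambda^j,\qquad \eta=\sum_{\tilde\Lambda\in\mathfrak{R}(Q)}e^{-\tilde\Lambda^l t}\tilde\Lambda^{-j}B_{\tilde\Lambda},$$ $$\tilde\Omega=\sum_{\Lambda\in\mathfrak{R}(P),\,\tilde\Lambda\in\mathfrak{R}(Q)}e^{-\tilde\Lambda^l t}\tilde\Lambda^{-j}X_{\tilde\Lambda,\Lambda}e^{\Lambda^l t}\Lambda^j+\tilde\omega,$$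 and assume $\tilde\Omega$ is invertible. Let $\varphi_0$ be a constant $m\times m$ matrix. Then $$\varphi=\varphi_0+\theta\,\tilde\Omega^{-1}\eta_{(-l)},\qquad \hat q=-\theta\,\tilde\Omega^{-1}\gamma_1,\qquad \tilde r=-\tilde\Omega_{(l)}^{-1}\eta$$ solve the system $$(\varphi_{(k)}-\varphi)_t+(\varphi_{(k)}-\varphi+I)(\varphi_{(l)}-\varphi)_{(k-l)}-(\varphi_{(l)}-\varphi)(\varphi_{(k)}-\varphi+I)=(\hat q_{(l)}\tilde r_{(k-l)})_{(-l)}-\hat q_{(l)}\tilde r_{(k-l)},$$ $$\hat q_t=\hat q_{(l)}+(\varphi_{(l)}-\varphi)\,\hat q,\qquad \tilde r_t=-\tilde r_{(-l)}-\tilde r\,(\varphi_{(l)}-\varphi).$$ Consequently $W=\varphi_{(1)}-\varphi+\frac1k I$ together with $\hat q,\tilde r$ solves $$\Big(\sum_{i=0}^{k-1}W_{(i)}\Big)_t+\sum_{i=0}^{k-1}W_{(i)}\sum_{i=k-l}^{k-1}W_{(i)}-\sum_{i=0}^{l-1}W_{(i)}\sum_{i=0}^{k-1}W_{(i)}=(\hat q_{(l)}\tilde r_{(k-l)})_{(-l)}-\hat q_{(l)}\tilde r_{(k-l)},$$ $$\hat q_t=\hat q_{(l)}+\Big(\sum_{i=0}^{l-1}W_{(i)}-\tfrac{l}{k}I\Big)\hat q,\qquad \tilde r_t=-\tilde r_{(-l)}-\tilde r\Big(\sum_{i=0}^{l-1}W_{(i)}-\tfrac{l}{k}I\Big).$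$
   Context: All dependent variables are matrix-valued functions of a continuous variable $t$ and a discrete variable $j\in\mathbb{Z}$; subscript $t$ denotes the derivative with respect to $t$, and for an integer $s$, $f_{(s)}(t,j)=f(t,j+s)$ denotes the shifted function. $I$ denotes the identity matrix. *)

theory Defs
  imports "HOL-Analysis.Analysis"
begin

fun mpow :: "'a::semiring_1^'n^'n \<Rightarrow> nat \<Rightarrow> 'a^'n^'n" where
  "mpow M 0 = mat 1"
| "mpow M (Suc k) = M ** mpow M k"

definition mpowi :: "'a::semiring_1^'n^'n \<Rightarrow> int \<Rightarrow> 'a^'n^'n" where
  "mpowi M z = (if 0 \<le> z then mpow M (nat z) else mpow (matrix_inv M) (nat (- z)))"

definition mexp :: "complex^'n^'n \<Rightarrow> complex^'n^'n" where
  "mexp M = (\<Sum>i. (1 / fact i) *\<^sub>R mpow M i)"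

text \<open>Oriented integer sum  sum_{i=a}^{b} f i , with the convention
  sum_{i=a}^{b} = - sum_{i=b+1}^{a-1} when b < a - 1 (empty when b = a - 1).\<close>
definition isum :: "(int \<Rightarrow> 'a::ab_group_add) \<Rightarrow> int \<Rightarrow> int \<Rightarrow> 'a" where
  "isum f a b = (if a \<le> b + 1 then (\<Sum>i\<in>{a..b}. f i) else - (\<Sum>i\<in>{b+1..a-1}. f i))"

end

theory Submission
  imports Defs
begin



lemma vec_hvd:
  fixes f :: "real \<Rightarrow> 'a::real_normed_vector^'i"
  assumes "\<And>i. ((\<lambda>s. f s $ i) has_vector_derivative (D $ i)) (at t)"
  shows "(f has_vector_derivative D) (at t)"
proof -
  have "((\<lambda>y. ((f y $ i - f t $ i) - (y - t) *\<^sub>R D $ i) /\<^sub>R norm (y - t)) \<longlongrightarrow> 0) (at t)" for i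
    using assms[of i] unfolding has_vector_derivative_def has_derivative_at_within by simp
  then have "((\<lambda>y. ((f y - f t) - (y - t) *\<^sub>R D) /\<^sub>R norm (y - t)) \<longlongrightarrow> 0) (at t)"
    by (intro vec_tendstoI) simp
  then show ?thesis
    unfolding has_vector_derivative_def has_derivative_at_within
    by (simp add: bounded_linear_scaleR_left)
qed

lemma vec_nth_hvd:
  fixes f :: "real \<Rightarrow> 'a::real_normed_vector^'i"
  assumes "(f has_vector_derivative D) (at t)"
  shows "((\<lambda>s. f s $ i) has_vector_derivative (D $ i)) (at t)"
  using bounded_linear.has_vector_derivative[OF bounded_linear_vec_nth assms] .

lemma mat_hvd:
  fixes f :: "real \<Rightarrow> 'a::real_normed_vector^'i^'j"
  assumes "\<And>i j. ((\<lambda>s. f s $ i $ j) has_vector_derivative (D $ i $ j)) (at t)"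
  shows "(f has_vector_derivative D) (at t)"
  by (intro vec_hvd assms)

lemma mat_nth_hvd:
  fixes f :: "real \<Rightarrow> 'a::real_normed_vector^'i^'j"
  assumes "(f has_vector_derivative D) (at t)"
  shows "((\<lambda>s. f s $ i $ j) has_vector_derivative (D $ i $ j)) (at t)"
  by (intro vec_nth_hvd assms)

lemma mm_add_r: "((A::'a::semiring_1^'n^'m) + B) ** C = A ** C + B ** C"
  by (simp add: matrix_matrix_mult_def vec_eq_iff distrib_right sum.distrib)
lemma mm_diff_l: "(A::'a::ring_1^'n^'m) ** (B - C) = A ** B - A ** C"
  by (simp add: matrix_matrix_mult_def vec_eq_iff right_diff_distrib sum_subtractf)
lemma mm_diff_r: "((A::'a::ring_1^'n^'m) - B) ** C = A ** C - B ** C"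
  by (simp add: matrix_matrix_mult_def vec_eq_iff left_diff_distrib sum_subtractf)
lemma mm_neg_l: "(- (A::'a::ring_1^'n^'m)) ** B = - (A ** B)"
  by (simp add: matrix_matrix_mult_def vec_eq_iff sum_negf)
lemma mm_neg_r: "(A::'a::ring_1^'n^'m) ** (- B) = - (A ** B)"
  by (simp add: matrix_matrix_mult_def vec_eq_iff sum_negf)
lemma mm_sum_l: "(\<Sum>x\<in>S. f x) ** (C::'a::semiring_1^'p^'n) = (\<Sum>x\<in>S. f x ** C)"
  by (induction S rule: infinite_finite_induct) (auto simp: mm_add_r)
lemma mm_sum_r: "(C::'a::semiring_1^'n^'m) ** (\<Sum>x\<in>S. f x) = (\<Sum>x\<in>S. C ** f x)"
  by (induction S rule: infinite_finite_induct) (auto simp: matrix_add_ldistrib)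

lemmas mm_distribs = matrix_add_ldistrib mm_add_r mm_diff_l mm_diff_r mm_neg_l mm_neg_r

lemma bilinear_mm: "bilinear (\<lambda>(A::complex^'n^'m) (B::complex^'p^'n). A ** B)"
  unfolding bilinear_def
  by (auto intro!: linearI simp: matrix_add_ldistrib mm_add_r matrix_scalar_ac scalar_matrix_assoc)

lemma bounded_bilinear_mm: "bounded_bilinear (\<lambda>(A::complex^'n^'m) (B::complex^'p^'n). A ** B)"
  using bilinear_mm bilinear_conv_bounded_bilinear by blast

lemma mm_hvd:
  fixes F :: "real \<Rightarrow> complex^'n^'m" and G :: "real \<Rightarrow> complex^'p^'n"
  assumes "(F has_vector_derivative F') (at t)" "(G has_vector_derivative G') (at t)"
  shows "((\<lambda>s. F s ** G s) has_vector_derivative (F' ** G t + F t ** G')) (at t)"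
  using bounded_bilinear.has_vector_derivative[OF bounded_bilinear_mm assms]
  by (simp add: add.commute)




lemma minv_r: "invertible (A::'a::semiring_1^'n^'m) \<Longrightarrow> A ** matrix_inv A = mat 1"
  unfolding invertible_def matrix_inv_def by (erule someI2_ex) simp
lemma minv_l: "invertible (A::'a::semiring_1^'n^'m) \<Longrightarrow> matrix_inv A ** A = mat 1"
  unfolding invertible_def matrix_inv_def by (erule someI2_ex) simp

lemma mpow_Suc_r: "mpow M (Suc n) = mpow M n ** M"
  by (induction n) (simp_all add: matrix_mul_assoc)

lemma mpow_comm: "C ** M = M ** C \<Longrightarrow> C ** mpow M n = mpow M n ** C"
  by (induction n) (simp_all add: matrix_mul_assoc, metis matrix_mul_assoc)

lemma mpowi_succ:
  fixes M :: "'a::field^'n^'n"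
  assumes "invertible M"
  shows "mpowi M (a + 1) = M ** mpowi M a"
proof (cases "a \<ge> 0")
  case True
  then have "nat (a+1) = Suc (nat a)" by simp
  with True show ?thesis by (simp add: mpowi_def)
next
  case False
  then have e: "nat (-a) = Suc (nat (- (a+1)))" by simp
  have "M ** mpowi M a = M ** (matrix_inv M ** mpow (matrix_inv M) (nat (- (a+1))))"
    using False by (simp add: mpowi_def e)
  also have "\<dots> = mpow (matrix_inv M) (nat (- (a+1)))"
    by (simp add: matrix_mul_assoc minv_r[OF assms])
  also have "\<dots> = mpowi M (a+1)"
    using False by (cases "a = -1") (auto simp: mpowi_def)
  finally show ?thesis ..
qed

lemma minv_comm: "invertible (M::'a::semiring_1^'n^'n) \<Longrightarrow> matrix_inv M ** M = M ** matrix_inv M"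
  by (simp add: minv_l minv_r)

lemma mpowi_comm1:
  fixes M :: "'a::field^'n^'n"
  assumes "invertible M"
  shows "mpowi M a ** M = M ** mpowi M a"
proof -
  have c: "matrix_inv M ** M = M ** matrix_inv M" by (rule minv_comm[OF assms])
  show ?thesis unfolding mpowi_def
    using mpow_comm[of M M] mpow_comm[OF c[symmetric]]
    by auto
qed

lemma mpowi_succ_r:
  fixes M :: "'a::field^'n^'n"
  assumes "invertible M"
  shows "mpowi M (a + 1) = mpowi M a ** M"
  using mpowi_succ[OF assms] mpowi_comm1[OF assms] by simp

lemma mpowi_zero[simp]: "mpowi M 0 = mat 1"
  by (simp add: mpowi_def)

lemma mpowi_pred_r:
  fixes M :: "'a::field^'n^'n"
  assumes "invertible M"
  shows "mpowi M (a - 1) = mpowi M a ** matrix_inv M"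
proof -
  have "mpowi M a ** matrix_inv M = mpowi M (a - 1) ** M ** matrix_inv M"
    using mpowi_succ_r[OF assms, of "a - 1"] by simp
  also have "\<dots> = mpowi M (a - 1)"
    by (simp add: matrix_mul_assoc[symmetric] minv_r[OF assms])
  finally show ?thesis ..
qed

lemma mpowi_add:
  fixes M :: "'a::field^'n^'n"
  assumes "invertible M"
  shows "mpowi M a ** mpowi M b = mpowi M (a + b)"
proof (induction b rule: int_induct[where k=0])
  case base
  then show ?case by simp
next
  case (step1 i)
  have "mpowi M a ** mpowi M (i + 1) = (mpowi M a ** mpowi M i) ** M"
    by (simp add: mpowi_succ_r[OF assms] matrix_mul_assoc)
  also have "\<dots> = mpowi M (a + i + 1)"
    using step1 by (simp add: mpowi_succ_r[OF assms])
  finally show ?case by (simp add: add.assoc)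
next
  case (step2 i)
  have "mpowi M a ** mpowi M (i - 1) = (mpowi M a ** mpowi M i) ** matrix_inv M"
    by (simp add: mpowi_pred_r[OF assms] matrix_mul_assoc)
  also have "\<dots> = mpowi M (a + i - 1)"
    using step2 by (simp add: mpowi_pred_r[OF assms])
  finally show ?case by (simp add: algebra_simps)
qed

lemma mpowi_comm:
  fixes M :: "'a::field^'n^'n"
  assumes "invertible M"
  shows "mpowi M a ** mpowi M b = mpowi M b ** mpowi M a"
  by (simp add: mpowi_add[OF assms] add.commute)




lemma mpow_scale: "mpow (c *\<^sub>R (N::complex^'n^'n)) i = (c ^ i) *\<^sub>R mpow N i"
  by (induction i) (simp_all add: matrix_scalar_ac scalar_matrix_assoc[symmetric])

definition msum :: "complex^'n^'n \<Rightarrow> real" where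
  "msum N = (\<Sum>a\<in>UNIV. \<Sum>c\<in>UNIV. norm (N $ a $ c))"

lemma mpow_entry_bound: "norm (mpow (N::complex^'n^'n) i $ a $ b) \<le> msum N ^ i"
proof (induction i arbitrary: a b)
  case 0
  then show ?case by (simp add: mat_def)
next
  case (Suc i)
  have "norm (mpow N (Suc i) $ a $ b) = norm (\<Sum>c\<in>UNIV. N $ a $ c * mpow N i $ c $ b)"
    by (simp add: matrix_matrix_mult_def)
  also have "\<dots> \<le> (\<Sum>c\<in>UNIV. norm (N $ a $ c) * msum N ^ i)"
    by (rule order_trans[OF norm_sum sum_mono]) (simp add: norm_mult Suc mult_left_mono)
  also have "\<dots> = (\<Sum>c\<in>UNIV. norm (N $ a $ c)) * msum N ^ i"
    by (simp add: sum_distrib_right)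
  also have "(\<Sum>c\<in>UNIV. norm (N $ a $ c)) \<le> msum N"
    unfolding msum_def
    by (rule member_le_sum[where f="\<lambda>a. \<Sum>c\<in>UNIV. norm (N $ a $ c)"]) (auto intro: sum_nonneg)
  then have "(\<Sum>c\<in>UNIV. norm (N $ a $ c)) * msum N ^ i \<le> msum N * msum N ^ i"
    by (rule mult_right_mono) (simp add: msum_def sum_nonneg)
  finally show ?case by simp
qed

definition cf :: "complex^'n^'n \<Rightarrow> 'n \<Rightarrow> 'n \<Rightarrow> nat \<Rightarrow> complex" where
  "cf N a b i = mpow N i $ a $ b / fact i"

lemma cf_summable: "summable (\<lambda>i. cf N a b i * z ^ i)"
proof (rule summable_comparison_test'[OF summable_exp[of "msum N * norm z"]])
  fix i :: nat
  have "norm (cf N a b i * z ^ i) = norm (mpow N i $ a $ b) * norm z ^ i / fact i"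
    by (simp add: cf_def norm_mult norm_divide norm_power)
  also have "\<dots> \<le> msum N ^ i * norm z ^ i / fact i"
    by (intro divide_right_mono mult_right_mono mpow_entry_bound) auto
  finally show "norm (cf N a b i * z ^ i) \<le> inverse (fact i) * (msum N * norm z) ^ i"
    by (simp add: power_mult_distrib field_simps)
qed

lemma mat_sums:
  fixes f :: "nat \<Rightarrow> 'a::real_normed_vector^'i^'j"
  assumes "\<And>a b. (\<lambda>i. f i $ a $ b) sums (x $ a $ b)"
  shows "f sums x"
  using assms unfolding sums_def
  by (intro vec_tendstoI) (simp add: sum_component)

lemma mexp_term_entry:
  "((1 / fact i) *\<^sub>R mpow (t *\<^sub>R (N::complex^'n^'n)) i) $ a $ b = cf N a b i * (of_real t) ^ i"
proof -
  have "((1 / fact i) *\<^sub>R mpow (t *\<^sub>R N) i) $ a $ b = ((1 / fact i) * t ^ i) *\<^sub>R (mpow N i $ a $ b)"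
    by (simp add: mpow_scale)
  also have "\<dots> = cf N a b i * (of_real t) ^ i"
    by (simp add: cf_def scaleR_conv_of_real divide_inverse of_real_power mult_ac)
  finally show ?thesis .
qed

definition mexpE :: "complex^'n^'n \<Rightarrow> real \<Rightarrow> complex^'n^'n" where
  "mexpE N t = (\<chi> a b. \<Sum>i. cf N a b i * (of_real t) ^ i)"

lemma mexp_sums: "(\<lambda>i. (1 / fact i) *\<^sub>R mpow (t *\<^sub>R (N::complex^'n^'n)) i) sums mexpE N t"
  by (rule mat_sums) (unfold mexp_term_entry mexpE_def vec_lambda_beta, rule summable_sums[OF cf_summable])

lemma mexp_eq: "mexp (t *\<^sub>R N) = mexpE N t"
  unfolding mexp_def by (rule sums_unique[OF mexp_sums, symmetric])

definition mexpD :: "complex^'n^'n \<Rightarrow> real \<Rightarrow> complex^'n^'n" where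
  "mexpD N t = (\<chi> a b. \<Sum>i. diffs (cf N a b) i * (of_real t) ^ i)"

lemma mexp_hvd0: "((\<lambda>s. mexp (s *\<^sub>R N)) has_vector_derivative mexpD N t) (at t)"
proof -
  have "((\<lambda>s. mexpE N s $ a $ b) has_vector_derivative mexpD N t $ a $ b) (at t)" for a b
  proof -
    have "((\<lambda>z. \<Sum>i. cf N a b i * z ^ i) has_field_derivative
            (\<Sum>i. diffs (cf N a b) i * (of_real t) ^ i)) (at (of_real t))"
      by (rule termdiffs_strong_converges_everywhere) (rule cf_summable)
    from has_vector_derivative_real_field[OF this]
    show ?thesis unfolding mexpE_def mexpD_def vec_lambda_beta .
  qed
  then show ?thesis unfolding mexp_eq by (rule mat_hvd)
qed

lemma bl_left: "bounded_linear (\<lambda>X::complex^'p^'n. (C::complex^'n^'m) ** X)"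
  using bounded_bilinear.bounded_linear_right[OF bounded_bilinear_mm] .
lemma bl_right: "bounded_linear (\<lambda>X::complex^'n^'m. X ** (C::complex^'p^'n))"
  using bounded_bilinear.bounded_linear_left[OF bounded_bilinear_mm] .

lemma mexpD_sums: "(\<lambda>i. (1 / fact i) *\<^sub>R (t ^ i *\<^sub>R mpow (N::complex^'n^'n) (Suc i))) sums mexpD N t"
proof (rule mat_sums)
  fix a b
  have e: "((1 / fact i) *\<^sub>R (t ^ i *\<^sub>R mpow N (Suc i))) $ a $ b = diffs (cf N a b) i * (of_real t) ^ i" for i
  proof -
    have "((1 / fact i) *\<^sub>R (t ^ i *\<^sub>R mpow N (Suc i))) $ a $ b = ((1 / fact i) * t ^ i) *\<^sub>R (mpow N (Suc i) $ a $ b)"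
      by (simp del: mpow.simps)
    also have "\<dots> = diffs (cf N a b) i * (of_real t) ^ i"
      using of_nat_neq_0[of i, where 'a=complex]
      by (simp add: diffs_def cf_def scaleR_conv_of_real divide_inverse of_real_power mult_ac del: mpow.simps)
    finally show ?thesis .
  qed
  show "(\<lambda>i. ((1 / fact i) *\<^sub>R (t ^ i *\<^sub>R mpow N (Suc i))) $ a $ b) sums mexpD N t $ a $ b"
    unfolding e mexpD_def vec_lambda_beta
    by (rule summable_sums[OF termdiff_converges_all[OF cf_summable]])
qed

lemma mexpD_left: "mexpD N t = N ** mexp (t *\<^sub>R N)"
proof -
  have s1: "(\<lambda>i. N ** ((1 / fact i) *\<^sub>R mpow (t *\<^sub>R N) i)) sums (N ** mexpE N t)"
    by (rule bounded_linear.sums[OF bl_left mexp_sums])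
  have eq: "(\<lambda>i. N ** ((1 / fact i) *\<^sub>R mpow (t *\<^sub>R N) i)) = (\<lambda>i. (1 / fact i) *\<^sub>R (t ^ i *\<^sub>R mpow N (Suc i)))"
    by (simp add: fun_eq_iff mpow_scale matrix_scalar_ac scalar_matrix_assoc[symmetric])
  have "mexpD N t = N ** mexpE N t"
    using sums_unique2[OF mexpD_sums s1[unfolded eq]] .
  then show ?thesis by (simp add: mexp_eq)
qed

lemma mexp_comm:
  assumes "C ** N = N ** (C::complex^'n^'n)"
  shows "C ** mexp (t *\<^sub>R N) = mexp (t *\<^sub>R N) ** C"
proof -
  have s1: "(\<lambda>i. C ** ((1 / fact i) *\<^sub>R mpow (t *\<^sub>R N) i)) sums (C ** mexpE N t)"
    by (rule bounded_linear.sums[OF bl_left mexp_sums])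
  have s2: "(\<lambda>i. ((1 / fact i) *\<^sub>R mpow (t *\<^sub>R N) i) ** C) sums (mexpE N t ** C)"
    by (rule bounded_linear.sums[OF bl_right mexp_sums])
  have eq: "(\<lambda>i. C ** ((1 / fact i) *\<^sub>R mpow (t *\<^sub>R N) i)) = (\<lambda>i. ((1 / fact i) *\<^sub>R mpow (t *\<^sub>R N) i) ** C)"
    using mpow_comm[OF assms]
    by (simp add: fun_eq_iff mpow_scale matrix_scalar_ac scalar_matrix_assoc[symmetric])
  have "C ** mexpE N t = mexpE N t ** C"
    using sums_unique2[OF s1[unfolded eq] s2] .
  then show ?thesis by (simp add: mexp_eq)
qed

lemma mexp_hvd: "((\<lambda>s. mexp (s *\<^sub>R N)) has_vector_derivative (N ** mexp (t *\<^sub>R N))) (at t)"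
  using mexp_hvd0[of N t] unfolding mexpD_left .

lemma mexp_hvd_r: "((\<lambda>s. mexp (s *\<^sub>R N)) has_vector_derivative (mexp (t *\<^sub>R N) ** N)) (at t)"
  using mexp_hvd[of N t] unfolding mexp_comm[of N N, OF refl] .




lemma prod_differentiable:
  fixes f :: "'i \<Rightarrow> real \<Rightarrow> complex"
  shows "finite I \<Longrightarrow> (\<And>i. i \<in> I \<Longrightarrow> f i differentiable (at t)) \<Longrightarrow> (\<lambda>s. \<Prod>i\<in>I. f i s) differentiable (at t)"
  by (induction I rule: finite_induct) auto

lemma det_differentiable:
  fixes M :: "real \<Rightarrow> complex^'n^'n"
  assumes "\<And>i j. (\<lambda>s. M s $ i $ j) differentiable (at t)"
  shows "(\<lambda>s. det (M s)) differentiable (at t)"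
  unfolding det_def
  by (intro differentiable_sum differentiable_mult differentiable_const prod_differentiable ballI assms)
     (auto simp: finite_permutations)

lemma minv_entry:
  fixes A :: "complex^'n^'n"
  assumes "invertible A"
  shows "matrix_inv A $ r $ c = det (\<chi> i j. if j = r then (if i = c then 1 else 0) else A $ i $ j) / det A"
proof -
  define x where "x = (\<chi> i. matrix_inv A $ i $ c)"
  have "A *v x = (\<chi> i. (A ** matrix_inv A) $ i $ c)"
    by (simp add: x_def matrix_vector_mult_def matrix_matrix_mult_def)
  also have "\<dots> = (\<chi> i. if i = c then 1 else 0)"
    by (simp add: minv_r[OF assms] mat_def)
  finally have Ax: "A *v x = (\<chi> i. if i = c then 1 else 0)" .
  have cr: "det (\<chi> i j. if j = r then (A *v x) $ i else A $ i $ j) = x $ r * det A"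
    by (rule cramer_lemma)
  have "det (\<chi> i j. if j = r then (if i = c then 1 else 0) else A $ i $ j) = matrix_inv A $ r $ c * det A"
  proof -
    have "(\<chi> i j. if j = r then (A *v x) $ i else A $ i $ j) = (\<chi> i j. if j = r then (if i = c then 1 else 0) else A $ i $ j)"
      by (simp add: Ax vec_eq_iff)
    then show ?thesis using cr by (simp add: x_def)
  qed
  moreover have "det A \<noteq> 0" using assms invertible_det_nz by blast
  ultimately show ?thesis by simp
qed

lemma minv_hvd:
  fixes F :: "real \<Rightarrow> complex^'n^'n"
  assumes inv: "\<And>s. invertible (F s)" and dF: "(F has_vector_derivative F') (at t)"
  shows "((\<lambda>s. matrix_inv (F s)) has_vector_derivative - (matrix_inv (F t) ** F' ** matrix_inv (F t))) (at t)"
proof -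
  define G where "G = (\<lambda>s. matrix_inv (F s))"
  have Fe: "(\<lambda>s. F s $ i $ j) differentiable (at t)" for i j
    using mat_nth_hvd[OF dF] differentiableI_vector by blast
  have Ge: "(\<lambda>s. G s $ r $ c) differentiable (at t)" for r c
  proof -
    have "(\<lambda>s. det (\<chi> i j. if j = r then (if i = c then 1 else 0) else F s $ i $ j) / det (F s)) differentiable (at t)"
  proof -
    have h: "(\<lambda>s. (\<chi> i j. if j = r then (if i = c then 1 else 0) else F s $ i $ j) $ i $ j) differentiable (at t)" for i j
      by (cases "j = r") (auto simp: Fe)
    show ?thesis
      using inv[of t] invertible_det_nz
      by (intro differentiable_divide det_differentiable h Fe) auto
  qed
    moreover have "(\<lambda>s. G s $ r $ c) = (\<lambda>s. det (\<chi> i j. if j = r then (if i = c then 1 else 0) else F s $ i $ j) / det (F s))"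
      by (simp add: G_def minv_entry[OF inv])
    ultimately show ?thesis by simp
  qed
  define G' where "G' = (\<chi> r c. vector_derivative (\<lambda>s. G s $ r $ c) (at t))"
  have dG: "(G has_vector_derivative G') (at t)"
    by (rule mat_hvd) (simp add: G'_def vector_derivative_works[THEN iffD1, OF Ge])
  have "((\<lambda>s. F s ** G s) has_vector_derivative (F' ** G t + F t ** G')) (at t)"
    by (rule mm_hvd[OF dF dG])
  moreover have "(\<lambda>s. F s ** G s) = (\<lambda>s. mat 1)"
    by (simp add: G_def minv_r[OF inv])
  ultimately have "((\<lambda>s. mat 1) has_vector_derivative (F' ** G t + F t ** G')) (at t)" by simp
  then have z: "F' ** G t + F t ** G' = 0"
    using vector_derivative_unique_at has_vector_derivative_const by blast
  have "G' = G t ** (F t ** G')"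
    by (simp add: matrix_mul_assoc G_def minv_l[OF inv])
  also have "F t ** G' = - (F' ** G t)" using z by (simp add: eq_neg_iff_add_eq_0 add.commute)
  finally have "G' = - (G t ** F' ** G t)" by (simp add: mm_neg_r matrix_mul_assoc)
  then show ?thesis using dG by (simp add: G_def)
qed




context
  fixes th :: "int \<Rightarrow> complex^'n^'m" and et :: "int \<Rightarrow> complex^'m^'n" and Om :: "int \<Rightarrow> complex^'n^'n"
    and P Q g1 :: "complex^'n^'n" and k l :: int
  assumes inv: "\<And>j. invertible (Om j)"
    and R4: "\<And>j. Om (j + l) = Om j + et j ** th j"
    and R5: "\<And>a. th (a + k) + th (a + k - l) = - (th a ** P)"
    and R6: "\<And>i. Q ** et i = - (et (i - k) + et (i - k + l))"
    and R7: "\<And>j. Om j ** P - Q ** Om (j + k) = g1 + et j ** th (j + k - l)"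
begin

abbreviation "G j \<equiv> matrix_inv (Om j)"

lemma c1: "Om j ** G j = mat 1" by (rule minv_r[OF inv])
lemma c2: "G j ** Om j = mat 1" by (rule minv_l[OF inv])
lemma c3: "X ** Om j ** G j = X" by (simp add: c1 matrix_mul_assoc[symmetric])
lemma c4: "X ** G j ** Om j = X" by (simp add: c2 matrix_mul_assoc[symmetric])

lemmas cancel = c1 c2 c3 c4

lemma K1: "G j = G (j + l) + G (j + l) ** et j ** th j ** G j"
proof -
  have "G j = G (j + l) ** Om (j + l) ** G j" by (simp add: cancel)
  also have "\<dots> = G (j + l) + G (j + l) ** et j ** th j ** G j"
    by (simp add: R4 mm_distribs matrix_mul_assoc cancel)
  finally show ?thesis .
qed

lemma K2:
  assumes hb: "b = a + k - l"
  shows "G a ** g1 ** G b = P ** G b - G a ** Q - G a ** Q ** et b ** th b ** G b - G a ** et a ** th b ** G b"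
proof -
  have i1: "a + k = b + l" using hb by simp
  have i2: "a + k - l = b" using hb by simp
  have "Om a ** P - Q ** Om (b + l) = g1 + et a ** th b"
    using R7[of a] unfolding i1 [symmetric] i2 .
  then have g: "g1 = Om a ** P - Q ** (Om b + et b ** th b) - et a ** th b"
    unfolding R4 by (simp add: algebra_simps)
  show ?thesis
    unfolding g by (simp add: mm_distribs matrix_mul_assoc cancel)
qed

lemma S1:
  assumes hb: "b = a + k - l"
  shows "th a ** G a ** g1 ** G b ** et (b - l) =
    - (th (b + l) ** G b ** et (b - l)) - th b ** G b ** et (b - l)
    + th a ** G a ** et (a - l - l) + th a ** G a ** et (a - l)
    + th a ** G a ** et (a - l) ** th b ** G b ** et (b - l)"
proof -
  have e5: "th a ** P = - (th (b + l) + th b)"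
  proof -
    have "th (a + k) = th (b + l)" "th (a + k - l) = th b" by (rule arg_cong[where f=th], simp add: hb)+
    then have "- (th a ** P) = th (b + l) + th b" using R5[of a] by simp
    then show ?thesis by (metis minus_minus)
  qed
  have e6a: "Q ** et (b - l) = - (et (a - l - l) + et (a - l))"
  proof -
    have "et (b - l - k) = et (a - l - l)" "et (b - l - k + l) = et (a - l)" by (rule arg_cong[where f=et], simp add: hb)+
    then show ?thesis using R6[of "b - l"] by simp
  qed
  have e6b: "Q ** et b = - (et (a - l) + et a)"
  proof -
    have "et (b - k) = et (a - l)" "et (b - k + l) = et a" by (rule arg_cong[where f=et], simp add: hb)+
    then show ?thesis using R6[of b] by simp
  qed
  have "th a ** G a ** g1 ** G b ** et (b - l) = th a ** (G a ** g1 ** G b) ** et (b - l)"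
    by (simp add: matrix_mul_assoc)
  also have "\<dots> = th a ** (P ** G b - G a ** Q - G a ** Q ** et b ** th b ** G b - G a ** et a ** th b ** G b) ** et (b - l)"
    by (simp only: K2[OF hb])
  also have "\<dots> = (th a ** P) ** G b ** et (b - l) - th a ** G a ** (Q ** et (b - l))
      - th a ** G a ** (Q ** et b) ** th b ** G b ** et (b - l) - th a ** G a ** et a ** th b ** G b ** et (b - l)"
    by (simp add: mm_distribs matrix_mul_assoc)
  also have "\<dots> = (- (th (b + l) + th b)) ** G b ** et (b - l) - th a ** G a ** (- (et (a - l - l) + et (a - l)))
      - th a ** G a ** (- (et (a - l) + et a)) ** th b ** G b ** et (b - l) - th a ** G a ** et a ** th b ** G b ** et (b - l)"
    by (simp only: e5 e6a e6b)
  also have "\<dots> = - (th (b + l) ** G b ** et (b - l)) - th b ** G b ** et (b - l)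
    + th a ** G a ** et (a - l - l) + th a ** G a ** et (a - l)
    + th a ** G a ** et (a - l) ** th b ** G b ** et (b - l)"
    by (simp add: mm_distribs matrix_mul_assoc algebra_simps)
  finally show ?thesis .
qed

lemma K3: "th (i + l) ** G i ** et (i - l) = th (i + l) ** G (i + l) ** et (i - l)
   + th (i + l) ** G (i + l) ** et i ** th i ** G i ** et (i - l)"
proof -
  have "th (i + l) ** G i ** et (i - l) = th (i + l) ** (G (i + l) + G (i + l) ** et i ** th i ** G i) ** et (i - l)"
    by (subst K1[of i]) (rule refl)
  also have "\<dots> = th (i + l) ** G (i + l) ** et (i - l) + th (i + l) ** G (i + l) ** et i ** th i ** G i ** et (i - l)"
    by (simp add: mm_distribs matrix_mul_assoc)
  finally show ?thesis .
qed

lemma EQ1: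
  fixes ph0 :: "complex^'m^'m"
  defines "ph \<equiv> \<lambda>i. ph0 + th i ** G i ** et (i - l)"
    and "qq \<equiv> \<lambda>i. - (th i ** G i ** g1)"
    and "rr \<equiv> \<lambda>i. - (G (i + l) ** et i)"
    and "Dv \<equiv> \<lambda>i. th (i + l) ** G i ** et (i - l) - th i ** G i ** et (i - l) ** th i ** G i ** et (i - l)
                  - th i ** G i ** et (i - l - l)"
  shows "Dv (j + k) - Dv j = (qq j ** rr (j + k - 2 * l) - qq (j + l) ** rr (j + k - l))
          - (ph (j + k) - ph j + mat 1) ** (ph (j + k) - ph (j + k - l))
          + (ph (j + l) - ph j) ** (ph (j + k) - ph j + mat 1)"
proof -
  have I1: "th j ** G j ** g1 ** G (j + k - l) ** et (j + k - l - l) =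
    - (th (j + k) ** G (j + k - l) ** et (j + k - l - l)) - th (j + k - l) ** G (j + k - l) ** et (j + k - l - l)
    + th j ** G j ** et (j - l - l) + th j ** G j ** et (j - l)
    + th j ** G j ** et (j - l) ** th (j + k - l) ** G (j + k - l) ** et (j + k - l - l)"
    using S1[of "j + k - l" j] by simp
  have I2: "th (j + l) ** G (j + l) ** g1 ** G (j + k) ** et (j + k - l) =
    - (th (j + k + l) ** G (j + k) ** et (j + k - l)) - th (j + k) ** G (j + k) ** et (j + k - l)
    + th (j + l) ** G (j + l) ** et (j - l) + th (j + l) ** G (j + l) ** et j
    + th (j + l) ** G (j + l) ** et j ** th (j + k) ** G (j + k) ** et (j + k - l)"
    using S1[of "j + k" "j + l"] by simp
  have I3: "th (j + k) ** G (j + k - l) ** et (j + k - l - l) = th (j + k) ** G (j + k) ** et (j + k - l - l)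
      + th (j + k) ** G (j + k) ** et (j + k - l) ** th (j + k - l) ** G (j + k - l) ** et (j + k - l - l)"
    using K3[of "j + k - l"] by simp
  have I4: "th (j + l) ** G j ** et (j - l) = th (j + l) ** G (j + l) ** et (j - l)
      + th (j + l) ** G (j + l) ** et j ** th j ** G j ** et (j - l)"
    using K3[of j] by simp
  have G1: "qq j ** rr (j + k - 2 * l) = th j ** G j ** g1 ** G (j + k - l) ** et (j + k - l - l)"
  proof -
    have "G (j + k - 2 * l + l) = G (j + k - l)" "et (j + k - 2 * l) = et (j + k - l - l)"
      by (rule arg_cong[where f=et] arg_cong[where f=G], simp)+
    then show ?thesis by (simp add: qq_def rr_def mm_neg_l mm_neg_r matrix_mul_assoc)
  qed
  have G2: "qq (j + l) ** rr (j + k - l) = th (j + l) ** G (j + l) ** g1 ** G (j + k) ** et (j + k - l)"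
    by (simp add: qq_def rr_def mm_neg_l mm_neg_r matrix_mul_assoc)
  have phl: "ph (j + l) = ph0 + th (j + l) ** G (j + l) ** et j"
    by (simp add: ph_def)
  show ?thesis
    unfolding G1 G2 I1 I2 I3 phl
    unfolding ph_def Dv_def
    unfolding I4
    by (simp add: mm_distribs matrix_mul_assoc algebra_simps)
qed

lemma EQq:
  fixes ph0 :: "complex^'m^'m"
  defines "ph \<equiv> \<lambda>i. ph0 + th i ** G i ** et (i - l)"
    and "qq \<equiv> \<lambda>i. - (th i ** G i ** g1)"
  shows "- (th (j + l) ** G j ** g1) + th j ** G j ** et (j - l) ** th j ** G j ** g1
       = qq (j + l) + (ph (j + l) - ph j) ** qq j"
proof -
  have I: "th (j + l) ** G j ** g1 = th (j + l) ** G (j + l) ** g1 + th (j + l) ** G (j + l) ** et j ** th j ** G j ** g1"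
  proof -
    have "th (j + l) ** G j ** g1 = th (j + l) ** (G (j + l) + G (j + l) ** et j ** th j ** G j) ** g1"
      by (subst K1[of j]) (rule refl)
    then show ?thesis by (simp add: mm_distribs matrix_mul_assoc)
  qed
  show ?thesis unfolding I ph_def qq_def
    by (simp add: mm_distribs matrix_mul_assoc algebra_simps)
qed

lemma EQr:
  fixes ph0 :: "complex^'m^'m"
  defines "ph \<equiv> \<lambda>i. ph0 + th i ** G i ** et (i - l)"
    and "rr \<equiv> \<lambda>i. - (G (i + l) ** et i)"
  shows "G (j + l) ** et j ** th (j + l) ** G (j + l) ** et j + G (j + l) ** et (j - l)
       = - rr (j - l) - rr j ** (ph (j + l) - ph j)"
proof -
  have I: "G j ** et (j - l) = G (j + l) ** et (j - l) + G (j + l) ** et j ** th j ** G j ** et (j - l)"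
  proof -
    have "G j ** et (j - l) = (G (j + l) + G (j + l) ** et j ** th j ** G j) ** et (j - l)"
      by (subst K1[of j]) (rule refl)
    then show ?thesis by (simp add: mm_distribs matrix_mul_assoc)
  qed
  show ?thesis unfolding ph_def rr_def
    by (simp add: I mm_distribs matrix_mul_assoc algebra_simps)
qed

end



lemma hvd_cl: "(H has_vector_derivative H') (at t) \<Longrightarrow> ((\<lambda>s. (C::complex^'n^'m) ** (H s :: complex^'p^'n)) has_vector_derivative C ** H') (at t)"
  using bounded_linear.has_vector_derivative[OF bl_left] .
lemma hvd_cr: "(H has_vector_derivative H') (at t) \<Longrightarrow> ((\<lambda>s. (H s :: complex^'n^'m) ** (C::complex^'p^'n)) has_vector_derivative H' ** C) (at t)"
  using bounded_linear.has_vector_derivative[OF bl_right] .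

lemma pw_comm0:
  assumes "invertible (M::complex^'n^'n)"
  shows "mpowi M a ** mexp (c *\<^sub>R mpowi M b) = mexp (c *\<^sub>R mpowi M b) ** mpowi M a"
  by (rule mexp_comm) (rule mpowi_comm[OF assms])

lemma pw_comm:
  assumes "invertible (M::complex^'n^'n)"
  shows "X ** mpowi M a ** mexp (c *\<^sub>R mpowi M b) = X ** mexp (c *\<^sub>R mpowi M b) ** mpowi M a"
  by (simp add: matrix_mul_assoc[symmetric] pw_comm0[OF assms])

lemma pw_merge:
  assumes "invertible (M::complex^'n^'n)"
  shows "X ** mpowi M a ** mpowi M b = X ** mpowi M (a + b)"
  by (simp add: matrix_mul_assoc[symmetric] mpowi_add[OF assms])

lemma hvd_E:
  "((\<lambda>s. mexp (s *\<^sub>R N)) has_vector_derivative (mexp (t *\<^sub>R N) ** N)) (at t)"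
  by (rule mexp_hvd_r)

lemma hvd_F:
  "((\<lambda>s. mexp ((- s) *\<^sub>R N)) has_vector_derivative - (mexp ((- t) *\<^sub>R N) ** N)) (at t)"
proof -
  have "((\<lambda>s. mexp (s *\<^sub>R (- N))) has_vector_derivative (mexp (t *\<^sub>R (- N)) ** (- N))) (at t)"
    by (rule mexp_hvd_r)
  then show ?thesis by (simp add: mm_neg_r)
qed


context
  fixes k l :: int
    and P Q \<omega> :: "complex^'n^'n"
    and RP RQ :: "(complex^'n^'n) set"
    and A :: "complex^'n^'n \<Rightarrow> complex^'n^'m"
    and B :: "complex^'n^'n \<Rightarrow> complex^'m^'n"
    and X :: "complex^'n^'n \<Rightarrow> complex^'n^'n \<Rightarrow> complex^'n^'n"
    and \<theta> :: "real \<Rightarrow> int \<Rightarrow> complex^'n^'m"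
    and \<eta> :: "real \<Rightarrow> int \<Rightarrow> complex^'m^'n"
    and \<Omega> :: "real \<Rightarrow> int \<Rightarrow> complex^'n^'n"
  assumes RP_fin: "finite RP"
    and RP: "\<And>\<Lambda>. \<Lambda> \<in> RP \<Longrightarrow> invertible \<Lambda> \<and> - (mpowi \<Lambda> k + mpowi \<Lambda> (k - l)) = P"
    and RQ_fin: "finite RQ"
    and RQ: "\<And>\<Lambda>'. \<Lambda>' \<in> RQ \<Longrightarrow> invertible \<Lambda>' \<and> - (mpowi \<Lambda>' k + mpowi \<Lambda>' (k - l)) = Q"
    and Xeq: "\<And>\<Lambda> \<Lambda>'. \<Lambda> \<in> RP \<Longrightarrow> \<Lambda>' \<in> RQ \<Longrightarrow>
               mpowi \<Lambda>' (- l) ** X \<Lambda>' \<Lambda> ** mpowi \<Lambda> l - X \<Lambda>' \<Lambda> = B \<Lambda>' ** A \<Lambda>"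
    and \<theta>_def: "\<theta> = (\<lambda>t j. \<Sum>\<Lambda>\<in>RP. A \<Lambda> ** mexp (t *\<^sub>R mpowi \<Lambda> l) ** mpowi \<Lambda> j)"
    and \<eta>_def: "\<eta> = (\<lambda>t j. \<Sum>\<Lambda>'\<in>RQ. mexp ((- t) *\<^sub>R mpowi \<Lambda>' l) ** mpowi \<Lambda>' (- j) ** B \<Lambda>')"
    and \<Omega>_def: "\<Omega> = (\<lambda>t j. (\<Sum>\<Lambda>\<in>RP. \<Sum>\<Lambda>'\<in>RQ.
               mexp ((- t) *\<^sub>R mpowi \<Lambda>' l) ** mpowi \<Lambda>' (- j) ** X \<Lambda>' \<Lambda>
                 ** mexp (t *\<^sub>R mpowi \<Lambda> l) ** mpowi \<Lambda> j) + \<omega>)"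
begin

lemma CR1: "((\<lambda>s. \<theta> s j) has_vector_derivative \<theta> t (j + l)) (at t)"
proof -
  have d: "((\<lambda>s. A \<Lambda> ** mexp (s *\<^sub>R mpowi \<Lambda> l) ** mpowi \<Lambda> j) has_vector_derivative
      A \<Lambda> ** (mexp (t *\<^sub>R mpowi \<Lambda> l) ** mpowi \<Lambda> l) ** mpowi \<Lambda> j) (at t)" for \<Lambda>
    by (intro hvd_cr hvd_cl hvd_E)
  have e: "A \<Lambda> ** (mexp (t *\<^sub>R mpowi \<Lambda> l) ** mpowi \<Lambda> l) ** mpowi \<Lambda> j
      = A \<Lambda> ** mexp (t *\<^sub>R mpowi \<Lambda> l) ** mpowi \<Lambda> (j + l)" if "\<Lambda> \<in> RP" for \<Lambda>
  proof -
    have "mpowi \<Lambda> (j + l) = mpowi \<Lambda> l ** mpowi \<Lambda> j"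
      using mpowi_add[of \<Lambda> l j] RP[OF that] by (simp add: add.commute)
    then show ?thesis by (simp add: matrix_mul_assoc)
  qed
  show ?thesis unfolding \<theta>_def
    by (rule has_vector_derivative_eq_rhs[OF has_vector_derivative_sum[OF d]]) (simp add: e)
qed

lemma CR2: "((\<lambda>s. \<eta> s j) has_vector_derivative - \<eta> t (j - l)) (at t)"
proof -
  have d: "((\<lambda>s. mexp ((- s) *\<^sub>R mpowi \<Lambda> l) ** mpowi \<Lambda> (- j) ** B \<Lambda>) has_vector_derivative
      - (mexp ((- t) *\<^sub>R mpowi \<Lambda> l) ** mpowi \<Lambda> l) ** mpowi \<Lambda> (- j) ** B \<Lambda>) (at t)" for \<Lambda>
    by (intro hvd_cr hvd_F)
  have e: "- (mexp ((- t) *\<^sub>R mpowi \<Lambda> l) ** mpowi \<Lambda> l) ** mpowi \<Lambda> (- j) ** B \<Lambda>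
      = - (mexp ((- t) *\<^sub>R mpowi \<Lambda> l) ** mpowi \<Lambda> (- (j - l)) ** B \<Lambda>)" if "\<Lambda> \<in> RQ" for \<Lambda>
  proof -
    have "mpowi \<Lambda> (- (j - l)) = mpowi \<Lambda> l ** mpowi \<Lambda> (- j)"
      using mpowi_add[of \<Lambda> l "- j"] RQ[OF that] by simp
    then show ?thesis by (simp add: matrix_mul_assoc mm_neg_l)
  qed
  show ?thesis unfolding \<eta>_def
    apply (rule has_vector_derivative_eq_rhs[OF has_vector_derivative_sum[OF d]])
    apply (subst sum_negf[symmetric])
    apply (rule sum.cong[OF refl])
    apply (erule e)
    done
qed

lemma prodsum: "\<eta> t a ** \<theta> t b = (\<Sum>\<Lambda>\<in>RP. \<Sum>\<Lambda>'\<in>RQ.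
   mexp ((- t) *\<^sub>R mpowi \<Lambda>' l) ** mpowi \<Lambda>' (- a) ** B \<Lambda>' ** A \<Lambda> ** mexp (t *\<^sub>R mpowi \<Lambda> l) ** mpowi \<Lambda> b)"
  unfolding \<eta>_def \<theta>_def
  by (simp add: mm_sum_l mm_sum_r matrix_mul_assoc sum.swap[where A=RQ])

lemma CR3: "((\<lambda>s. \<Omega> s j) has_vector_derivative \<eta> t (j - l) ** \<theta> t j) (at t)"
proof -
  have d: "((\<lambda>s. mexp ((- s) *\<^sub>R mpowi \<Lambda>' l) ** mpowi \<Lambda>' (- j) ** X \<Lambda>' \<Lambda>
                 ** mexp (s *\<^sub>R mpowi \<Lambda> l) ** mpowi \<Lambda> j) has_vector_derivative
      ((- (mexp ((- t) *\<^sub>R mpowi \<Lambda>' l) ** mpowi \<Lambda>' l)) ** mpowi \<Lambda>' (- j) ** X \<Lambda>' \<Lambda> ** mexp (t *\<^sub>R mpowi \<Lambda> l)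
       + mexp ((- t) *\<^sub>R mpowi \<Lambda>' l) ** mpowi \<Lambda>' (- j) ** X \<Lambda>' \<Lambda> ** (mexp (t *\<^sub>R mpowi \<Lambda> l) ** mpowi \<Lambda> l))
      ** mpowi \<Lambda> j) (at t)" for \<Lambda> \<Lambda>'
    by (intro hvd_cr mm_hvd hvd_F hvd_E)
  have e: "((- (mexp ((- t) *\<^sub>R mpowi \<Lambda>' l) ** mpowi \<Lambda>' l)) ** mpowi \<Lambda>' (- j) ** X \<Lambda>' \<Lambda> ** mexp (t *\<^sub>R mpowi \<Lambda> l)
       + mexp ((- t) *\<^sub>R mpowi \<Lambda>' l) ** mpowi \<Lambda>' (- j) ** X \<Lambda>' \<Lambda> ** (mexp (t *\<^sub>R mpowi \<Lambda> l) ** mpowi \<Lambda> l))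
      ** mpowi \<Lambda> j = mexp ((- t) *\<^sub>R mpowi \<Lambda>' l) ** mpowi \<Lambda>' (- (j - l)) ** B \<Lambda>' ** A \<Lambda> ** mexp (t *\<^sub>R mpowi \<Lambda> l) ** mpowi \<Lambda> j"
    if "\<Lambda> \<in> RP" "\<Lambda>' \<in> RQ" for \<Lambda> \<Lambda>'
  proof -
    have i1: "invertible \<Lambda>" "invertible \<Lambda>'" using RP[OF that(1)] RQ[OF that(2)] by auto
    have BA: "B \<Lambda>' ** A \<Lambda> = mpowi \<Lambda>' (- l) ** X \<Lambda>' \<Lambda> ** mpowi \<Lambda> l - X \<Lambda>' \<Lambda>"
      using Xeq[OF that] by simp
    have "mexp ((- t) *\<^sub>R mpowi \<Lambda>' l) ** mpowi \<Lambda>' (- (j - l)) ** B \<Lambda>' ** A \<Lambda> ** mexp (t *\<^sub>R mpowi \<Lambda> l) ** mpowi \<Lambda> j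
       = mexp ((- t) *\<^sub>R mpowi \<Lambda>' l) ** mpowi \<Lambda>' (- (j - l)) ** (B \<Lambda>' ** A \<Lambda>) ** mexp (t *\<^sub>R mpowi \<Lambda> l) ** mpowi \<Lambda> j"
      by (simp add: matrix_mul_assoc)
    also have "\<dots> = mexp ((- t) *\<^sub>R mpowi \<Lambda>' l) ** mpowi \<Lambda>' (- (j - l)) ** (mpowi \<Lambda>' (- l) ** X \<Lambda>' \<Lambda> ** mpowi \<Lambda> l - X \<Lambda>' \<Lambda>) ** mexp (t *\<^sub>R mpowi \<Lambda> l) ** mpowi \<Lambda> j"
      unfolding BA ..
    finally show ?thesis
      by (simp add: mm_distribs matrix_mul_assoc pw_merge pw_comm i1 algebra_simps del: scaleR_minus_left)
  qed
  show ?thesis unfolding \<Omega>_def prodsum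
    apply (rule has_vector_derivative_eq_rhs)
     apply (rule has_vector_derivative_add_const[THEN iffD2])
     apply (rule has_vector_derivative_sum)
     apply (rule has_vector_derivative_sum)
     apply (rule d)
    apply (rule sum.cong[OF refl])+
    apply (erule (1) e)
    done
qed

lemma CR4: "\<Omega> t (j + l) = \<Omega> t j + \<eta> t j ** \<theta> t j"
proof -
  have e: "mexp ((- t) *\<^sub>R mpowi \<Lambda>' l) ** mpowi \<Lambda>' (- (j + l)) ** X \<Lambda>' \<Lambda> ** mexp (t *\<^sub>R mpowi \<Lambda> l) ** mpowi \<Lambda> (j + l)
     = mexp ((- t) *\<^sub>R mpowi \<Lambda>' l) ** mpowi \<Lambda>' (- j) ** X \<Lambda>' \<Lambda> ** mexp (t *\<^sub>R mpowi \<Lambda> l) ** mpowi \<Lambda> j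
     + mexp ((- t) *\<^sub>R mpowi \<Lambda>' l) ** mpowi \<Lambda>' (- j) ** B \<Lambda>' ** A \<Lambda> ** mexp (t *\<^sub>R mpowi \<Lambda> l) ** mpowi \<Lambda> j"
    if "\<Lambda> \<in> RP" "\<Lambda>' \<in> RQ" for \<Lambda> \<Lambda>'
  proof -
    have i1: "invertible \<Lambda>" "invertible \<Lambda>'" using RP[OF that(1)] RQ[OF that(2)] by auto
    have BA: "B \<Lambda>' ** A \<Lambda> = mpowi \<Lambda>' (- l) ** X \<Lambda>' \<Lambda> ** mpowi \<Lambda> l - X \<Lambda>' \<Lambda>"
      using Xeq[OF that] by simp
    have "mexp ((- t) *\<^sub>R mpowi \<Lambda>' l) ** mpowi \<Lambda>' (- j) ** B \<Lambda>' ** A \<Lambda> ** mexp (t *\<^sub>R mpowi \<Lambda> l) ** mpowi \<Lambda> j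
       = mexp ((- t) *\<^sub>R mpowi \<Lambda>' l) ** mpowi \<Lambda>' (- j) ** (B \<Lambda>' ** A \<Lambda>) ** mexp (t *\<^sub>R mpowi \<Lambda> l) ** mpowi \<Lambda> j"
      by (simp add: matrix_mul_assoc)
    also have "\<dots> = mexp ((- t) *\<^sub>R mpowi \<Lambda>' l) ** mpowi \<Lambda>' (- j) ** (mpowi \<Lambda>' (- l) ** X \<Lambda>' \<Lambda> ** mpowi \<Lambda> l - X \<Lambda>' \<Lambda>) ** mexp (t *\<^sub>R mpowi \<Lambda> l) ** mpowi \<Lambda> j"
      unfolding BA ..
    finally show ?thesis
      by (simp add: mm_distribs matrix_mul_assoc pw_merge pw_comm i1 algebra_simps del: scaleR_minus_left)
  qed
  have s: "(\<Sum>\<Lambda>\<in>RP. \<Sum>\<Lambda>'\<in>RQ. mexp ((- t) *\<^sub>R mpowi \<Lambda>' l) ** mpowi \<Lambda>' (- (j + l)) ** X \<Lambda>' \<Lambda> ** mexp (t *\<^sub>R mpowi \<Lambda> l) ** mpowi \<Lambda> (j + l))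
     = (\<Sum>\<Lambda>\<in>RP. \<Sum>\<Lambda>'\<in>RQ. mexp ((- t) *\<^sub>R mpowi \<Lambda>' l) ** mpowi \<Lambda>' (- j) ** X \<Lambda>' \<Lambda> ** mexp (t *\<^sub>R mpowi \<Lambda> l) ** mpowi \<Lambda> j)
     + (\<Sum>\<Lambda>\<in>RP. \<Sum>\<Lambda>'\<in>RQ. mexp ((- t) *\<^sub>R mpowi \<Lambda>' l) ** mpowi \<Lambda>' (- j) ** B \<Lambda>' ** A \<Lambda> ** mexp (t *\<^sub>R mpowi \<Lambda> l) ** mpowi \<Lambda> j)"
    apply (simp only: sum.distrib[symmetric])
    apply (rule sum.cong[OF refl])+
    apply (erule (1) e)
    done
  show ?thesis unfolding \<Omega>_def prodsum s
    by (simp add: algebra_simps)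
qed

lemma CR5: "\<theta> t (a + k) + \<theta> t (a + k - l) = - (\<theta> t a ** P)"
proof -
  have e: "A \<Lambda> ** mexp (t *\<^sub>R mpowi \<Lambda> l) ** mpowi \<Lambda> (a + k) + A \<Lambda> ** mexp (t *\<^sub>R mpowi \<Lambda> l) ** mpowi \<Lambda> (a + k - l)
      = - (A \<Lambda> ** mexp (t *\<^sub>R mpowi \<Lambda> l) ** mpowi \<Lambda> a ** P)" if "\<Lambda> \<in> RP" for \<Lambda>
  proof -
    have i1: "invertible \<Lambda>" and PP: "P = - (mpowi \<Lambda> k + mpowi \<Lambda> (k - l))" using RP[OF that] by auto
    show ?thesis unfolding PP
      by (simp add: mm_distribs pw_merge i1 algebra_simps)
  qed
  have "\<theta> t (a + k) + \<theta> t (a + k - l) = (\<Sum>\<Lambda>\<in>RP. - (A \<Lambda> ** mexp (t *\<^sub>R mpowi \<Lambda> l) ** mpowi \<Lambda> a ** P))"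
    unfolding \<theta>_def
    apply (simp only: sum.distrib[symmetric])
    apply (rule sum.cong[OF refl])
    apply (erule e)
    done
  also have "\<dots> = - (\<theta> t a ** P)"
    unfolding \<theta>_def by (simp add: mm_sum_l sum_negf)
  finally show ?thesis .
qed

lemma CR6: "Q ** \<eta> t i = - (\<eta> t (i - k) + \<eta> t (i - k + l))"
proof -
  have e: "Q ** (mexp ((- t) *\<^sub>R mpowi \<Lambda> l) ** mpowi \<Lambda> (- i) ** B \<Lambda>)
     = - (mexp ((- t) *\<^sub>R mpowi \<Lambda> l) ** mpowi \<Lambda> (- (i - k)) ** B \<Lambda> + mexp ((- t) *\<^sub>R mpowi \<Lambda> l) ** mpowi \<Lambda> (- (i - k + l)) ** B \<Lambda>)"
    if "\<Lambda> \<in> RQ" for \<Lambda>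
  proof -
    have i1: "invertible \<Lambda>" and QQ: "Q = - (mpowi \<Lambda> k + mpowi \<Lambda> (k - l))" using RQ[OF that] by auto
    show ?thesis unfolding QQ
      by (simp add: mm_distribs matrix_mul_assoc pw_merge pw_comm0 i1 algebra_simps del: scaleR_minus_left)
  qed
  have "Q ** \<eta> t i = (\<Sum>\<Lambda>\<in>RQ. - (mexp ((- t) *\<^sub>R mpowi \<Lambda> l) ** mpowi \<Lambda> (- (i - k)) ** B \<Lambda> + mexp ((- t) *\<^sub>R mpowi \<Lambda> l) ** mpowi \<Lambda> (- (i - k + l)) ** B \<Lambda>))"
    unfolding \<eta>_def mm_sum_r
    apply (rule sum.cong[OF refl])
    apply (erule e)
    done
  also have "\<dots> = - (\<eta> t (i - k) + \<eta> t (i - k + l))"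
    unfolding \<eta>_def by (simp add: sum_negf sum.distrib sum_subtractf)
  finally show ?thesis .
qed

lemma CR7: "\<Omega> t j ** P - Q ** \<Omega> t (j + k) = (\<omega> ** P - Q ** \<omega>) + \<eta> t j ** \<theta> t (j + k - l)"
proof -
  have e: "mexp ((- t) *\<^sub>R mpowi \<Lambda>' l) ** mpowi \<Lambda>' (- j) ** X \<Lambda>' \<Lambda> ** mexp (t *\<^sub>R mpowi \<Lambda> l) ** mpowi \<Lambda> j ** P
     - Q ** (mexp ((- t) *\<^sub>R mpowi \<Lambda>' l) ** mpowi \<Lambda>' (- (j + k)) ** X \<Lambda>' \<Lambda> ** mexp (t *\<^sub>R mpowi \<Lambda> l) ** mpowi \<Lambda> (j + k))
     = mexp ((- t) *\<^sub>R mpowi \<Lambda>' l) ** mpowi \<Lambda>' (- j) ** B \<Lambda>' ** A \<Lambda> ** mexp (t *\<^sub>R mpowi \<Lambda> l) ** mpowi \<Lambda> (j + k - l)"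
    if "\<Lambda> \<in> RP" "\<Lambda>' \<in> RQ" for \<Lambda> \<Lambda>'
  proof -
    have i1: "invertible \<Lambda>" "invertible \<Lambda>'" using RP[OF that(1)] RQ[OF that(2)] by auto
    have PP: "P = - (mpowi \<Lambda> k + mpowi \<Lambda> (k - l))" using RP[OF that(1)] by auto
    have QQ: "Q = - (mpowi \<Lambda>' k + mpowi \<Lambda>' (k - l))" using RQ[OF that(2)] by auto
    have BA: "B \<Lambda>' ** A \<Lambda> = mpowi \<Lambda>' (- l) ** X \<Lambda>' \<Lambda> ** mpowi \<Lambda> l - X \<Lambda>' \<Lambda>"
      using Xeq[OF that] by simp
    have "mexp ((- t) *\<^sub>R mpowi \<Lambda>' l) ** mpowi \<Lambda>' (- j) ** B \<Lambda>' ** A \<Lambda> ** mexp (t *\<^sub>R mpowi \<Lambda> l) ** mpowi \<Lambda> (j + k - l)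
       = mexp ((- t) *\<^sub>R mpowi \<Lambda>' l) ** mpowi \<Lambda>' (- j) ** (B \<Lambda>' ** A \<Lambda>) ** mexp (t *\<^sub>R mpowi \<Lambda> l) ** mpowi \<Lambda> (j + k - l)"
      by (simp add: matrix_mul_assoc)
    also have "\<dots> = mexp ((- t) *\<^sub>R mpowi \<Lambda>' l) ** mpowi \<Lambda>' (- j) ** (mpowi \<Lambda>' (- l) ** X \<Lambda>' \<Lambda> ** mpowi \<Lambda> l - X \<Lambda>' \<Lambda>) ** mexp (t *\<^sub>R mpowi \<Lambda> l) ** mpowi \<Lambda> (j + k - l)"
      unfolding BA ..
    finally show ?thesis unfolding PP QQ
      by (simp add: mm_distribs matrix_mul_assoc pw_merge pw_comm pw_comm0 i1 algebra_simps del: scaleR_minus_left)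
  qed
  have "\<Omega> t j ** P - Q ** \<Omega> t (j + k) =
     (\<Sum>\<Lambda>\<in>RP. \<Sum>\<Lambda>'\<in>RQ. mexp ((- t) *\<^sub>R mpowi \<Lambda>' l) ** mpowi \<Lambda>' (- j) ** X \<Lambda>' \<Lambda> ** mexp (t *\<^sub>R mpowi \<Lambda> l) ** mpowi \<Lambda> j ** P
     - Q ** (mexp ((- t) *\<^sub>R mpowi \<Lambda>' l) ** mpowi \<Lambda>' (- (j + k)) ** X \<Lambda>' \<Lambda> ** mexp (t *\<^sub>R mpowi \<Lambda> l) ** mpowi \<Lambda> (j + k)))
     + (\<omega> ** P - Q ** \<omega>)"
    unfolding \<Omega>_def by (simp add: mm_distribs mm_sum_l mm_sum_r sum_subtractf algebra_simps)
  also have "\<dots> = (\<Sum>\<Lambda>\<in>RP. \<Sum>\<Lambda>'\<in>RQ. mexp ((- t) *\<^sub>R mpowi \<Lambda>' l) ** mpowi \<Lambda>' (- j) ** B \<Lambda>' ** A \<Lambda> ** mexp (t *\<^sub>R mpowi \<Lambda> l) ** mpowi \<Lambda> (j + k - l))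
     + (\<omega> ** P - Q ** \<omega>)"
    apply (rule arg_cong[where f="\<lambda>x. x + _"])
    apply (rule sum.cong[OF refl])+
    apply (erule (1) e)
    done
  finally show ?thesis unfolding prodsum by (simp add: algebra_simps)
qed

end




lemma sum_tel_nat:
  fixes f :: "int \<Rightarrow> 'a::real_vector"
  shows "(\<Sum>i\<in>{a..a + int n - 1}. f (j + i + 1) - f (j + i) + c) = f (j + a + int n) - f (j + a) + real n *\<^sub>R c"
proof (induction n)
  case 0
  then show ?case by simp
next
  case (Suc n)
  have s: "{a..a + int (Suc n) - 1} = insert (a + int n) {a..a + int n - 1}" by auto
  have "(a + int n) \<notin> {a..a + int n - 1}" by auto
  then show ?case unfolding s using Suc
    by (simp add: algebra_simps scaleR_add_left)
qed

lemma isum_tel: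
  fixes f :: "int \<Rightarrow> 'a::real_vector"
  shows "isum (\<lambda>i. f (j + i + 1) - f (j + i) + c) a b = f (j + b + 1) - f (j + a) + real_of_int (b - a + 1) *\<^sub>R c"
proof (cases "a \<le> b + 1")
  case True
  define n where "n = nat (b - a + 1)"
  have bn: "b = a + int n - 1" and rn: "real_of_int (b - a + 1) = real n" using True by (auto simp: n_def)
  show ?thesis unfolding isum_def using True sum_tel_nat[where f=f and j=j and a=a and n=n and c=c] unfolding rn by (simp add: bn add.assoc)
next
  case False
  define n where "n = nat (a - 1 - b)"
  have an: "a - 1 = (b + 1) + int n - 1" and rn: "real_of_int (a - 1 - b) = real n" using False by (auto simp: n_def)
  have "isum (\<lambda>i. f (j + i + 1) - f (j + i) + c) a b = - (f (j + (b + 1) + int n) - f (j + (b + 1)) + real n *\<^sub>R c)"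
    unfolding isum_def using False sum_tel_nat[where f=f and j=j and a="b + 1" and n=n and c=c] unfolding an by simp
  also have "\<dots> = f (j + b + 1) - f (j + a) + real_of_int (b - a + 1) *\<^sub>R c"
  proof -
    have e1: "f (j + (b + 1) + int n) = f (j + a)" using an by (intro arg_cong[where f=f]) simp
    have e2: "f (j + (b + 1)) = f (j + b + 1)" by (simp add: add.assoc)
    have e3: "real_of_int (b - a + 1) = - real n" using rn by simp
    show ?thesis unfolding e1 e2 e3 by (simp add: algebra_simps)
  qed
  finally show ?thesis .
qed

theorem mainTheorem3:
  fixes k l :: int
    and P Q \<omega> :: "complex^'n^'n"
    and RP RQ :: "(complex^'n^'n) set"
    and A :: "complex^'n^'n \<Rightarrow> complex^'n^'m"
    and B :: "complex^'n^'n \<Rightarrow> complex^'m^'n"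
    and X :: "complex^'n^'n \<Rightarrow> complex^'n^'n \<Rightarrow> complex^'n^'n"
    and \<phi>0 :: "complex^'m^'m"
    and \<gamma>1 :: "complex^'n^'n"
    and \<theta> :: "real \<Rightarrow> int \<Rightarrow> complex^'n^'m"
    and \<eta> :: "real \<Rightarrow> int \<Rightarrow> complex^'m^'n"
    and \<Omega> :: "real \<Rightarrow> int \<Rightarrow> complex^'n^'n"
    and \<phi> :: "real \<Rightarrow> int \<Rightarrow> complex^'m^'m"
    and q :: "real \<Rightarrow> int \<Rightarrow> complex^'n^'m"
    and r :: "real \<Rightarrow> int \<Rightarrow> complex^'m^'n"
    and W :: "real \<Rightarrow> int \<Rightarrow> complex^'m^'m"
  assumes k_pos: "k > 0"
    and RP_fin: "finite RP"
    and RP: "\<And>\<Lambda>. \<Lambda> \<in> RP \<Longrightarrow> invertible \<Lambda> \<and> - (mpowi \<Lambda> k + mpowi \<Lambda> (k - l)) = P"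
    and RQ_fin: "finite RQ"
    and RQ: "\<And>\<Lambda>'. \<Lambda>' \<in> RQ \<Longrightarrow> invertible \<Lambda>' \<and> - (mpowi \<Lambda>' k + mpowi \<Lambda>' (k - l)) = Q"
    and Xeq: "\<And>\<Lambda> \<Lambda>'. \<Lambda> \<in> RP \<Longrightarrow> \<Lambda>' \<in> RQ \<Longrightarrow>
               mpowi \<Lambda>' (- l) ** X \<Lambda>' \<Lambda> ** mpowi \<Lambda> l - X \<Lambda>' \<Lambda> = B \<Lambda>' ** A \<Lambda>"
    and \<gamma>1_def: "\<gamma>1 = \<omega> ** P - Q ** \<omega>"
    and \<theta>_def: "\<theta> = (\<lambda>t j. \<Sum>\<Lambda>\<in>RP. A \<Lambda> ** mexp (t *\<^sub>R mpowi \<Lambda> l) ** mpowi \<Lambda> j)"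
    and \<eta>_def: "\<eta> = (\<lambda>t j. \<Sum>\<Lambda>'\<in>RQ. mexp ((- t) *\<^sub>R mpowi \<Lambda>' l) ** mpowi \<Lambda>' (- j) ** B \<Lambda>')"
    and \<Omega>_def: "\<Omega> = (\<lambda>t j. (\<Sum>\<Lambda>\<in>RP. \<Sum>\<Lambda>'\<in>RQ.
               mexp ((- t) *\<^sub>R mpowi \<Lambda>' l) ** mpowi \<Lambda>' (- j) ** X \<Lambda>' \<Lambda>
                 ** mexp (t *\<^sub>R mpowi \<Lambda> l) ** mpowi \<Lambda> j) + \<omega>)"
    and \<Omega>_inv: "\<And>t j. invertible (\<Omega> t j)"
    and \<phi>_def: "\<phi> = (\<lambda>t j. \<phi>0 + \<theta> t j ** matrix_inv (\<Omega> t j) ** \<eta> t (j - l))"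
    and q_def: "q = (\<lambda>t j. - (\<theta> t j ** matrix_inv (\<Omega> t j) ** \<gamma>1))"
    and r_def: "r = (\<lambda>t j. - (matrix_inv (\<Omega> t (j + l)) ** \<eta> t j))"
    and W_def: "W = (\<lambda>t j. \<phi> t (j + 1) - \<phi> t j + (1 / real_of_int k) *\<^sub>R mat 1)"
  shows
   "(\<forall>t j.
      ((\<lambda>s. \<phi> s (j + k) - \<phi> s j) has_vector_derivative
         ((q t j ** r t (j + k - 2 * l) - q t (j + l) ** r t (j + k - l))
          - (\<phi> t (j + k) - \<phi> t j + mat 1) ** (\<phi> t (j + k) - \<phi> t (j + k - l))
          + (\<phi> t (j + l) - \<phi> t j) ** (\<phi> t (j + k) - \<phi> t j + mat 1))) (at t)
    \<and> ((\<lambda>s. q s j) has_vector_derivative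
         (q t (j + l) + (\<phi> t (j + l) - \<phi> t j) ** q t j)) (at t)
    \<and> ((\<lambda>s. r s j) has_vector_derivative
         (- r t (j - l) - r t j ** (\<phi> t (j + l) - \<phi> t j))) (at t))
  \<and> (\<forall>t j.
      ((\<lambda>s. isum (\<lambda>i. W s (j + i)) 0 (k - 1)) has_vector_derivative
         ((q t j ** r t (j + k - 2 * l) - q t (j + l) ** r t (j + k - l))
          - isum (\<lambda>i. W t (j + i)) 0 (k - 1) ** isum (\<lambda>i. W t (j + i)) (k - l) (k - 1)
          + isum (\<lambda>i. W t (j + i)) 0 (l - 1) ** isum (\<lambda>i. W t (j + i)) 0 (k - 1))) (at t)
    \<and> ((\<lambda>s. q s j) has_vector_derivative
         (q t (j + l) + (isum (\<lambda>i. W t (j + i)) 0 (l - 1)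
                          - (real_of_int l / real_of_int k) *\<^sub>R mat 1) ** q t j)) (at t)
    \<and> ((\<lambda>s. r s j) has_vector_derivative
         (- r t (j - l) - r t j ** (isum (\<lambda>i. W t (j + i)) 0 (l - 1)
                          - (real_of_int l / real_of_int k) *\<^sub>R mat 1))) (at t))"
proof -
  note ctx = RP_fin RP RQ_fin RQ Xeq \<theta>_def \<eta>_def \<Omega>_def
  have C1: "\<And>t j. ((\<lambda>s. \<theta> s j) has_vector_derivative \<theta> t (j + l)) (at t)"
    using CR1[OF ctx] .
  have C2: "\<And>t j. ((\<lambda>s. \<eta> s j) has_vector_derivative - \<eta> t (j - l)) (at t)"
    using CR2[OF ctx] .
  have C3: "\<And>t j. ((\<lambda>s. \<Omega> s j) has_vector_derivative \<eta> t (j - l) ** \<theta> t j) (at t)"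
    using CR3[OF ctx] .
  have C4: "\<And>t j. \<Omega> t (j + l) = \<Omega> t j + \<eta> t j ** \<theta> t j"
    using CR4[OF ctx] .
  have C5: "\<And>t a. \<theta> t (a + k) + \<theta> t (a + k - l) = - (\<theta> t a ** P)"
    using CR5[OF ctx] .
  have C6: "\<And>t i. Q ** \<eta> t i = - (\<eta> t (i - k) + \<eta> t (i - k + l))"
    using CR6[OF ctx] .
  have C7: "\<And>t j. \<Omega> t j ** P - Q ** \<Omega> t (j + k) = \<gamma>1 + \<eta> t j ** \<theta> t (j + k - l)"
    using CR7[OF ctx] unfolding \<gamma>1_def .
  have dG: "\<And>t j. ((\<lambda>s. matrix_inv (\<Omega> s j)) has_vector_derivative
      - (matrix_inv (\<Omega> t j) ** (\<eta> t (j - l) ** \<theta> t j) ** matrix_inv (\<Omega> t j))) (at t)"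
    by (rule minv_hvd[OF \<Omega>_inv C3])
  define Dv where "Dv = (\<lambda>t i. \<theta> t (i + l) ** matrix_inv (\<Omega> t i) ** \<eta> t (i - l)
      - \<theta> t i ** matrix_inv (\<Omega> t i) ** \<eta> t (i - l) ** \<theta> t i ** matrix_inv (\<Omega> t i) ** \<eta> t (i - l)
      - \<theta> t i ** matrix_inv (\<Omega> t i) ** \<eta> t (i - l - l))"
  have dphi: "((\<lambda>s. \<phi> s i) has_vector_derivative Dv t i) (at t)" for t i
    unfolding \<phi>_def
    apply (rule has_vector_derivative_eq_rhs)
     apply (rule has_vector_derivative_add[OF has_vector_derivative_const mm_hvd[OF mm_hvd[OF C1 dG] C2]])
    apply (simp add: Dv_def mm_distribs matrix_mul_assoc)
    done
  have part1: "((\<lambda>s. \<phi> s (j + k) - \<phi> s j) has_vector_derivative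
         ((q t j ** r t (j + k - 2 * l) - q t (j + l) ** r t (j + k - l))
          - (\<phi> t (j + k) - \<phi> t j + mat 1) ** (\<phi> t (j + k) - \<phi> t (j + k - l))
          + (\<phi> t (j + l) - \<phi> t j) ** (\<phi> t (j + k) - \<phi> t j + mat 1))) (at t)
    \<and> ((\<lambda>s. q s j) has_vector_derivative
         (q t (j + l) + (\<phi> t (j + l) - \<phi> t j) ** q t j)) (at t)
    \<and> ((\<lambda>s. r s j) has_vector_derivative
         (- r t (j - l) - r t j ** (\<phi> t (j + l) - \<phi> t j))) (at t)" for t j
  proof (intro conjI)
    note alg = EQ1[where th="\<theta> t" and et="\<eta> t" and Om="\<Omega> t", OF \<Omega>_inv C4 C5 C6 C7]
      EQq[where th="\<theta> t" and et="\<eta> t" and Om="\<Omega> t", OF \<Omega>_inv C4 C5 C6 C7]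
      EQr[where th="\<theta> t" and et="\<eta> t" and Om="\<Omega> t", OF \<Omega>_inv C4 C5 C6 C7]
    show "((\<lambda>s. \<phi> s (j + k) - \<phi> s j) has_vector_derivative
         ((q t j ** r t (j + k - 2 * l) - q t (j + l) ** r t (j + k - l))
          - (\<phi> t (j + k) - \<phi> t j + mat 1) ** (\<phi> t (j + k) - \<phi> t (j + k - l))
          + (\<phi> t (j + l) - \<phi> t j) ** (\<phi> t (j + k) - \<phi> t j + mat 1))) (at t)"
      apply (rule has_vector_derivative_eq_rhs[OF has_vector_derivative_diff[OF dphi dphi]])
      unfolding Dv_def \<phi>_def q_def r_def
      by (rule alg(1))
    show "((\<lambda>s. q s j) has_vector_derivative
         (q t (j + l) + (\<phi> t (j + l) - \<phi> t j) ** q t j)) (at t)"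
      unfolding q_def
      apply (rule has_vector_derivative_eq_rhs[OF has_vector_derivative_minus[OF hvd_cr[OF mm_hvd[OF C1 dG]]]])
      apply (rule trans[rotated])
       apply (unfold \<phi>_def)
       apply (rule alg(2))
      apply (simp add: mm_distribs matrix_mul_assoc)
      done
    show "((\<lambda>s. r s j) has_vector_derivative
         (- r t (j - l) - r t j ** (\<phi> t (j + l) - \<phi> t j))) (at t)"
      unfolding r_def
      apply (rule has_vector_derivative_eq_rhs[OF has_vector_derivative_minus[OF mm_hvd[OF dG C2]]])
      apply (rule trans[rotated])
       apply (unfold \<phi>_def)
       apply (rule alg(3))
      apply (simp add: mm_distribs matrix_mul_assoc)
      done
  qed
  have kz: "real_of_int k \<noteq> 0" using k_pos by simp
  have SK: "isum (\<lambda>i. W s (j + i)) 0 (k - 1) = \<phi> s (j + k) - \<phi> s j + mat 1" for s j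
    unfolding W_def using isum_tel[where f="\<phi> s" and j=j and a=0 and b="k - 1" and c="(1 / real_of_int k) *\<^sub>R mat 1"] kz
    by (simp add: add.assoc)
  have SKL: "isum (\<lambda>i. W s (j + i)) (k - l) (k - 1) = \<phi> s (j + k) - \<phi> s (j + k - l) + (real_of_int l / real_of_int k) *\<^sub>R mat 1" for s j
    unfolding W_def using isum_tel[where f="\<phi> s" and j=j and a="k - l" and b="k - 1" and c="(1 / real_of_int k) *\<^sub>R mat 1"] kz
    by (simp add: add.assoc add_diff_eq)
  have SL: "isum (\<lambda>i. W s (j + i)) 0 (l - 1) = \<phi> s (j + l) - \<phi> s j + (real_of_int l / real_of_int k) *\<^sub>R mat 1" for s j
    unfolding W_def using isum_tel[where f="\<phi> s" and j=j and a=0 and b="l - 1" and c="(1 / real_of_int k) *\<^sub>R mat 1"] kz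
    by (simp add: add.assoc)
  have sm1: "X ** (c *\<^sub>R mat 1) = c *\<^sub>R X" for X :: "complex^'m^'m" and c
    by (simp add: matrix_scalar_ac)
  have sm2: "(c *\<^sub>R mat 1) ** X = c *\<^sub>R X" for X :: "complex^'m^'m" and c
    by (simp add: scalar_matrix_assoc[symmetric])
  have sm3: "(c *\<^sub>R mat 1) ** X = c *\<^sub>R X" for X :: "complex^'n^'m" and c
    by (simp add: scalar_matrix_assoc[symmetric])
  have part2: "((\<lambda>s. isum (\<lambda>i. W s (j + i)) 0 (k - 1)) has_vector_derivative
         ((q t j ** r t (j + k - 2 * l) - q t (j + l) ** r t (j + k - l))
          - isum (\<lambda>i. W t (j + i)) 0 (k - 1) ** isum (\<lambda>i. W t (j + i)) (k - l) (k - 1)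
          + isum (\<lambda>i. W t (j + i)) 0 (l - 1) ** isum (\<lambda>i. W t (j + i)) 0 (k - 1))) (at t)
    \<and> ((\<lambda>s. q s j) has_vector_derivative
         (q t (j + l) + (isum (\<lambda>i. W t (j + i)) 0 (l - 1)
                          - (real_of_int l / real_of_int k) *\<^sub>R mat 1) ** q t j)) (at t)
    \<and> ((\<lambda>s. r s j) has_vector_derivative
         (- r t (j - l) - r t j ** (isum (\<lambda>i. W t (j + i)) 0 (l - 1)
                          - (real_of_int l / real_of_int k) *\<^sub>R mat 1))) (at t)" for t j
  proof (intro conjI)
    note p = part1[where t=t and j=j]
    show "((\<lambda>s. isum (\<lambda>i. W s (j + i)) 0 (k - 1)) has_vector_derivative
         ((q t j ** r t (j + k - 2 * l) - q t (j + l) ** r t (j + k - l))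
          - isum (\<lambda>i. W t (j + i)) 0 (k - 1) ** isum (\<lambda>i. W t (j + i)) (k - l) (k - 1)
          + isum (\<lambda>i. W t (j + i)) 0 (l - 1) ** isum (\<lambda>i. W t (j + i)) 0 (k - 1))) (at t)"
      unfolding SK SKL SL
      apply (rule has_vector_derivative_eq_rhs)
       apply (rule has_vector_derivative_add_const[THEN iffD2])
       apply (rule conjunct1[OF p])
      apply (simp add: mm_distribs sm1 sm2 algebra_simps)
      done
    show "((\<lambda>s. q s j) has_vector_derivative
         (q t (j + l) + (isum (\<lambda>i. W t (j + i)) 0 (l - 1)
                          - (real_of_int l / real_of_int k) *\<^sub>R mat 1) ** q t j)) (at t)"
      unfolding SL using p by simp
    show "((\<lambda>s. r s j) has_vector_derivative
         (- r t (j - l) - r t j ** (isum (\<lambda>i. W t (j + i)) 0 (l - 1)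
                          - (real_of_int l / real_of_int k) *\<^sub>R mat 1))) (at t)"
      unfolding SL using p by simp
  qed
  show ?thesis using part1 part2 by blast
qed


end
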